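(* Let $n>1$ be an odd integer, $k\ge1$, and $p$ the smallest prime divisor of $n$. Then for every $\mathbf{m}\in\mathbb{Z}_n^k\setminus\{\mathbf{0}\}$ and every $\mathbf{c}\|t\in\mathbb{Z}_n^k\times\mathbb{Z}_n$, $$\Pr_{\mathbf{m}',\mathbf{x}\leftarrow\mathbb{Z}_n^k,\ \mathbf{y}\leftarrow(\mathbb{Z}_n^* )^k}\big[\mathbf{m}'=\mathbf{m}\ \big|\ \mathcal{E}_{\mathbf{x}\|\mathbf{y}}(\mathbf{m}')=\mathbf{c}\|t\big]\le\frac{1}{(p-1)n^{k-1}},$$ i.e., $\mathrm{C}^{n,k}_{\mathrm{RDH}}$ provides $\frac{1}{(p-1)n^{k-1}}$-secrecy on $\mathbb{Z}_n^k\setminus\{\mathbf{0}\}$.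
   Context: For $\mathbf{y}\in(\mathbb{Z}_n^* )^k$ and $\mathbf{m}\in\mathbb{Z}_n^k$ let $\Upsilon_{\mathbf{y}}(\mathbf{m})=\sum_{i=1}^k m_iy_i\bmod n$. The code $\mathrm{C}^{n,k}_{\mathrm{RDH}}$ has keys $\mathbf{x}\|\mathbf{y}\in\mathbb{Z}_n^k\times(\mathbb{Z}_n^* )^k$ and encryption $\mathcal{E}_{\mathbf{x}\|\mathbf{y}}(\mathbf{m})=(\mathbf{m}+\mathbf{x}\bmod n)\,\|\,\Upsilon_{\mathbf{y}}(\mathbf{m})$ for $\mathbf{m}\in\mathbb{Z}_n^k$. All random choices are uniform and independent; the conditioning event is assumed to have positive probability. *)

theory Defs
  imports Complex_Main "HOL-Library.FuncSet" "HOL-Computational_Algebra.Primes"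
begin

definition vecs :: "nat \<Rightarrow> nat \<Rightarrow> (nat \<Rightarrow> nat) set" where
  "vecs n k = {0..<k} \<rightarrow>\<^sub>E {0..<n}"

definition unit_vecs :: "nat \<Rightarrow> nat \<Rightarrow> (nat \<Rightarrow> nat) set" where
  "unit_vecs n k = {0..<k} \<rightarrow>\<^sub>E {a \<in> {0..<n}. coprime a n}"

definition Upsilon :: "nat \<Rightarrow> nat \<Rightarrow> (nat \<Rightarrow> nat) \<Rightarrow> (nat \<Rightarrow> nat) \<Rightarrow> nat" where
  "Upsilon n k y m = (\<Sum>i<k. m i * y i) mod n"

definition RDH_enc :: "nat \<Rightarrow> nat \<Rightarrow> (nat \<Rightarrow> nat) \<Rightarrow> (nat \<Rightarrow> nat) \<Rightarrow> (nat \<Rightarrow> nat)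
    \<Rightarrow> (nat \<Rightarrow> nat) \<times> nat" where
  "RDH_enc n k x y m = (restrict (\<lambda>i. (m i + x i) mod n) {0..<k}, Upsilon n k y m)"

definition RDH_event :: "nat \<Rightarrow> nat \<Rightarrow> (nat \<Rightarrow> nat) \<Rightarrow> nat
    \<Rightarrow> ((nat \<Rightarrow> nat) \<times> (nat \<Rightarrow> nat) \<times> (nat \<Rightarrow> nat)) set" where
  "RDH_event n k c t = {(m', x, y). m' \<in> vecs n k \<and> x \<in> vecs n k \<and> y \<in> unit_vecs n k
       \<and> RDH_enc n k x y m' = (c, t)}"

text \<open>Pr[m' = m | E_{x||y}(m') = c||t] under the uniform product distribution (counting).\<close>
definition RDH_cond_prob :: "nat \<Rightarrow> nat \<Rightarrow> (nat \<Rightarrow> nat) \<Rightarrow> (nat \<Rightarrow> nat) \<Rightarrow> nat \<Rightarrow> real" where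
  "RDH_cond_prob n k m c t =
     real (card {(m', x, y) \<in> RDH_event n k c t. m' = m}) / real (card (RDH_event n k c t))"

end

theory Submission
  imports Defs "HOL-Number_Theory.Cong"
begin



lemma small_coprime:
  fixes n p a :: nat
  assumes "prime p" "\<forall>q. prime q \<and> q dvd n \<longrightarrow> p \<le> q" "0 < a" "a < p"
  shows "coprime a n"
proof (rule ccontr)
  assume "\<not> coprime a n"
  then obtain q where q: "prime q" "q dvd a" "q dvd n"
  proof -
    have "gcd a n \<noteq> 1" using \<open>\<not> coprime a n\<close> by (simp add: coprime_iff_gcd_eq_1)
    then obtain q where "prime q" "q dvd gcd a n" using prime_factor_nat by blast
    then show ?thesis using that by simp
  qed
  then have "q \<le> a" using assms(3) dvd_imp_le by blast
  moreover have "p \<le> q" using q assms(2) by blast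
  ultimately show False using assms(4) by linarith
qed

lemma solve_lin:
  fixes n y R t :: nat
  assumes "coprime y n" "n > 0"
  shows "\<exists>v<n. (v * y + R) mod n = t mod n"
proof -
  obtain u where u: "[y * u = Suc 0] (mod n)" using cong_solve_coprime_nat assms(1) by blast
  define v where "v = ((t + n*R - R) * u) mod n"
  have "v < n" using assms(2) by (simp add: v_def)
  moreover have "[v * y + R = t] (mod n)"
  proof -
    have "[v * y + R = ((t + n*R - R) * u) * y + R] (mod n)"
      unfolding v_def by (intro cong_add cong_mult cong_refl) (simp add: cong_def)
    also have "[((t + n*R - R) * u) * y + R = (t + n*R - R) * 1 + R] (mod n)"
    proof -
      have "[(t + n*R - R) * (y * u) = (t + n*R - R) * 1] (mod n)"
        using u by (intro cong_mult cong_refl) simp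
      then show ?thesis by (intro cong_add cong_refl) (simp add: ac_simps)
    qed
    also have "(t + n*R - R) * 1 + R = t + n*R" using assms(2)
      by (simp add: le_add2 trans_le_add2)
    also have "[t + n*R = t] (mod n)" by (simp add: cong_def)
    finally show ?thesis .
  qed
  ultimately show ?thesis unfolding cong_def by blast
qed


lemma mod_unique_add:
  fixes a x x' n :: nat
  assumes "(a + x) mod n = (a + x') mod n" "x < n" "x' < n"
  shows "x = x'"
proof -
  have "[a + x = a + x'] (mod n)" using assms(1) by (simp add: cong_def)
  then have "[x = x'] (mod n)" by (simp add: cong_add_lcancel_nat)
  then show ?thesis using assms(2,3) cong_less_imp_eq_nat by blast
qed

lemma fin_unit: "finite (unit_vecs n k)"
  unfolding unit_vecs_def by (rule finite_PiE) auto

lemma fin_vecs: "finite (vecs n k)"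
  unfolding vecs_def by (rule finite_PiE) auto

lemma x_unique:
  assumes h1: "(m, x, y) \<in> RDH_event n k c t" and h2: "(m, x', y') \<in> RDH_event n k c t"
  shows "x = x'"
proof
  have e1: "restrict (\<lambda>i. (m i + x i) mod n) {0..<k} = c"
    and v1: "x \<in> vecs n k"
    using h1 unfolding RDH_event_def RDH_enc_def by auto
  have e2: "restrict (\<lambda>i. (m i + x' i) mod n) {0..<k} = c"
    and v2: "x' \<in> vecs n k"
    using h2 unfolding RDH_event_def RDH_enc_def by auto
  fix i
  show "x i = x' i"
  proof (cases "i < k")
    case True
    have "(m i + x i) mod n = (m i + x' i) mod n"
      using fun_cong[OF e1, of i] fun_cong[OF e2, of i] True by simp
    moreover have "x i < n" "x' i < n" using v1 v2 True unfolding vecs_def by auto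
    ultimately show ?thesis using mod_unique_add by blast
  next
    case False
    then show ?thesis using v1 v2 unfolding vecs_def by (simp add: PiE_def extensional_def)
  qed
qed

lemma num_le:
  shows "card {(m', x, y) \<in> RDH_event n k c t. m' = m}
           \<le> card {y \<in> unit_vecs n k. Upsilon n k y m = t}"
proof -
  let ?S = "{(m', x, y) \<in> RDH_event n k c t. m' = m}"
  have fin: "finite {y \<in> unit_vecs n k. Upsilon n k y m = t}"
    using fin_unit by simp
  have inj: "inj_on (\<lambda>(m', x, y). y) ?S"
    unfolding inj_on_def using x_unique by fastforce
  have "(\<lambda>(m', x, y). y) ` ?S \<subseteq> {y \<in> unit_vecs n k. Upsilon n k y m = t}"
    unfolding RDH_event_def RDH_enc_def by auto
  then have "card ((\<lambda>(m', x, y). y) ` ?S) \<le> card {y \<in> unit_vecs n k. Upsilon n k y m = t}"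
    using fin card_mono by blast
  then show ?thesis using card_image[OF inj] by simp
qed


lemma no_small_mult:
  fixes n p a a' mj yj :: nat
  assumes "prime p" "\<forall>q. prime q \<and> q dvd n \<longrightarrow> p \<le> q"
    and "a' < a" "a < p" "[a' * (mj * yj) = a * (mj * yj)] (mod n)"
    and "coprime yj n" "0 < mj" "mj < n"
  shows False
proof -
  have "a' * (mj * yj) \<le> a * (mj * yj)" using assms(3) by simp
  then have "n dvd a * (mj * yj) - a' * (mj * yj)"
    using assms(5) cong_altdef_nat cong_sym by blast
  then have "n dvd (a - a') * (mj * yj)" by (simp add: diff_mult_distrib)
  moreover have "coprime n (a - a')"
    using small_coprime[OF assms(1,2), of "a - a'"] assms(3,4) by (simp add: coprime_commute)
  ultimately have "n dvd mj * yj" using coprime_dvd_mult_right_iff by blast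
  moreover have "coprime n yj" using assms(6) by (simp add: coprime_commute)
  ultimately have "n dvd mj" using coprime_dvd_mult_left_iff by blast
  then show False using assms(7,8) by (simp add: nat_dvd_not_less)
qed

lemma key:
  fixes n p j :: nat and m :: "nat \<Rightarrow> nat"
  assumes p: "prime p" and pmin: "\<forall>q. prime q \<and> q dvd n \<longrightarrow> p \<le> q"
    and n0: "n > 0" and jk: "j < k" and mj0: "m j \<noteq> 0" and mjn: "m j < n"
  shows "card {y \<in> unit_vecs n k. Upsilon n k y m = t} * (p - 1) \<le> card (unit_vecs n k)"
proof -
  let ?N = "{y \<in> unit_vecs n k. Upsilon n k y m = t}"
  define f where "f = (\<lambda>(y :: nat \<Rightarrow> nat, a :: nat). y(j := (a * y j) mod n))"
  have fin: "finite ?N" using fin_unit by simp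
  have img1: "f (y, a) \<in> unit_vecs n k" if y: "y \<in> ?N" and a: "a \<in> {1..<p}" for y a
  proof -
    have yj: "y j < n" "coprime (y j) n" using y jk unfolding unit_vecs_def by auto
    have ca: "coprime a n" using small_coprime[OF p pmin, of a] a by auto
    have "coprime ((a * y j) mod n) n"
      using ca yj n0 by (simp add: coprime_mod_left_iff)
    moreover have "(a * y j) mod n < n" using n0 by simp
    ultimately show "f (y, a) \<in> unit_vecs n k"
      using y jk unfolding f_def unit_vecs_def by (auto simp: PiE_iff extensional_def)
  qed
  have img: "f ` (?N \<times> {1..<p}) \<subseteq> unit_vecs n k" using img1 by auto
  have inj1: "y = y' \<and> a = a'"
    if y: "y \<in> unit_vecs n k" "Upsilon n k y m = t" and a: "a \<in> {1..<p}"
      and y': "y' \<in> unit_vecs n k" "Upsilon n k y' m = t" and a': "a' \<in> {1..<p}"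
      and eq: "f (y, a) = f (y', a')" for y a y' a'
  proof -
    have oth: "y i = y' i" if "i \<noteq> j" for i
      using fun_cong[OF eq, of i] that unfolding f_def by simp
    have atj: "(a * y j) mod n = (a' * y' j) mod n"
      using fun_cong[OF eq, of j] unfolding f_def by simp
    have yj: "y j < n" "coprime (y j) n" "y' j < n" "coprime (y' j) n"
      using y(1) y'(1) jk unfolding unit_vecs_def by auto
    have fk: "finite {..<k}" by simp
    have jin: "j \<in> {..<k}" using jk by simp
    have s1: "(\<Sum>i<k. m i * y i) = m j * y j + (\<Sum>i\<in>{..<k} - {j}. m i * y i)"
      using sum.remove[OF fk jin] by simp
    have s2: "(\<Sum>i<k. m i * y' i) = m j * y' j + (\<Sum>i\<in>{..<k} - {j}. m i * y' i)"
      using sum.remove[OF fk jin] by simp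
    have s3: "(\<Sum>i\<in>{..<k} - {j}. m i * y' i) = (\<Sum>i\<in>{..<k} - {j}. m i * y i)"
      using oth by (intro sum.cong) auto
    have "[(\<Sum>i\<in>{..<k} - {j}. m i * y i) + m j * y j
          = (\<Sum>i\<in>{..<k} - {j}. m i * y i) + m j * y' j] (mod n)"
      using y(2) y'(2) s1 s2 s3 unfolding Upsilon_def cong_def by (simp add: add.commute)
    then have c1: "[m j * y j = m j * y' j] (mod n)" by (simp add: cong_add_lcancel_nat)
    have c2: "[a * y j = a' * y' j] (mod n)" using atj by (simp add: cong_def)
    have "[a * (m j * y j) = m j * (a * y j)] (mod n)" by (simp add: ac_simps)
    also have "[m j * (a * y j) = m j * (a' * y' j)] (mod n)" using c2 by (simp add: cong_mult)
    also have "m j * (a' * y' j) = a' * (m j * y' j)" by (simp add: ac_simps)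
    also have "[a' * (m j * y' j) = a' * (m j * y j)] (mod n)"
      using c1 by (simp add: cong_mult cong_sym)
    finally have c3: "[a * (m j * y j) = a' * (m j * y j)] (mod n)" .
    have aa: "a = a'"
    proof (rule ccontr)
      assume "a \<noteq> a'"
      then consider "a' < a" | "a < a'" by linarith
      then show False
      proof cases
        case 1
        then show False using no_small_mult[OF p pmin 1, of "m j" "y j"] a c3 yj mj0 mjn
          by (auto simp: cong_sym)
      next
        case 2
        then show False using no_small_mult[OF p pmin 2, of "m j" "y j"] a' c3 yj mj0 mjn
          by (auto simp: cong_sym)
      qed
    qed
    have ca: "coprime a n" using small_coprime[OF p pmin, of a] a by auto
    have "[y j = y' j] (mod n)" using c2 aa ca cong_mult_lcancel_nat by blast
    then have "y j = y' j" using yj cong_less_imp_eq_nat by blast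
    then have "y = y'" using oth by (metis ext)
    then show "y = y' \<and> a = a'" using aa by simp
  qed
  have inj: "inj_on f (?N \<times> {1..<p})"
    unfolding inj_on_def using inj1 by auto
  have "card (?N \<times> {1..<p}) = card ?N * (p - 1)" by (simp add: card_cartesian_product)
  also have "\<dots> = card (f ` (?N \<times> {1..<p}))" using card_image[OF inj] by (simp add: card_cartesian_product)
  also have "\<dots> \<le> card (unit_vecs n k)" using img fin_unit card_mono by blast
  finally show ?thesis by (simp add: card_cartesian_product)
qed


lemma den_ge:
  fixes n k t :: nat and c :: "nat \<Rightarrow> nat"
  assumes n0: "n > 0" and k1: "k \<ge> 1" and c: "c \<in> vecs n k" and tn: "t < n"
  shows "card (unit_vecs n k) * n ^ (k - 1) \<le> card (RDH_event n k c t)"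
proof -
  define W where "W = {1..<k} \<rightarrow>\<^sub>E {0..<n::nat}"
  define R where "R = (\<lambda>y w. \<Sum>i\<in>{1..<k}. w i * (y i :: nat))"
  define sol where "sol = (\<lambda>y w. SOME v. v < n \<and> (v * y (0::nat) + R y w) mod n = t)"
  define mk where "mk = (\<lambda>y w. (w :: nat \<Rightarrow> nat)(0 := sol y w))"
  define xof where "xof = (\<lambda>m' :: nat \<Rightarrow> nat. restrict (\<lambda>i. (c i + n - m' i) mod n) {0..<k})"
  define g where "g = (\<lambda>(y, w). (mk y w, xof (mk y w), y))"
  have cardW: "card W = n ^ (k - 1)"
    unfolding W_def by (simp add: card_PiE)
  have kset: "{..<k} = insert 0 {1..<k}" using k1 by auto
  have sol: "sol y w < n \<and> (sol y w * y 0 + R y w) mod n = t" if y: "y \<in> unit_vecs n k" for y w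
  proof -
    have "coprime (y 0) n" using y k1 unfolding unit_vecs_def by auto
    then obtain v where "v < n" "(v * y 0 + R y w) mod n = t mod n" using solve_lin n0 by blast
    then have "\<exists>v. v < n \<and> (v * y 0 + R y w) mod n = t" using tn by auto
    then show ?thesis unfolding sol_def by (rule someI_ex)
  qed
  have mkv: "mk y w \<in> vecs n k" if "y \<in> unit_vecs n k" "w \<in> W" for y w
    using sol[OF that(1), of w] that(2) k1 unfolding mk_def W_def vecs_def
    by (auto simp: PiE_iff extensional_def)
  have mkU: "Upsilon n k y (mk y w) = t" if "y \<in> unit_vecs n k" for y w
  proof -
    have "(\<Sum>i<k. mk y w i * y i) = mk y w 0 * y 0 + (\<Sum>i\<in>{1..<k}. mk y w i * y i)"
      unfolding kset by simp
    also have "(\<Sum>i\<in>{1..<k}. mk y w i * y i) = R y w"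
      unfolding R_def mk_def by (intro sum.cong) auto
    finally show ?thesis using sol[OF that, of w] unfolding Upsilon_def mk_def by simp
  qed
  have xofv: "xof m' \<in> vecs n k" for m'
    using n0 unfolding xof_def vecs_def by auto
  have xofe: "restrict (\<lambda>i. (m' i + xof m' i) mod n) {0..<k} = c" if "m' \<in> vecs n k" for m'
  proof
    fix i
    show "restrict (\<lambda>i. (m' i + xof m' i) mod n) {0..<k} i = c i"
    proof (cases "i < k")
      case True
      have mi: "m' i < n" "c i < n" using that c True unfolding vecs_def by auto
      have "(m' i + (c i + n - m' i) mod n) mod n = (m' i + (c i + n - m' i)) mod n"
        by (simp add: mod_add_right_eq)
      also have "m' i + (c i + n - m' i) = c i + n" using mi by simp
      finally show ?thesis using True mi unfolding xof_def by simp
    next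
      case False
      then show ?thesis using c unfolding vecs_def by (simp add: PiE_def extensional_def)
    qed
  qed
  have gin: "g ` (Sigma (unit_vecs n k) (\<lambda>_. W)) \<subseteq> RDH_event n k c t"
    unfolding g_def RDH_event_def RDH_enc_def using mkv mkU xofv xofe by auto
  have inj: "inj_on g (Sigma (unit_vecs n k) (\<lambda>_. W))"
  proof -
    have "w = w'" if "w \<in> W" "w' \<in> W" "mk y w = mk y w'" for y w w'
    proof
      fix i
      show "w i = w' i"
      proof (cases "i = 0")
        case True
        then show ?thesis using that(1,2) unfolding W_def by (simp add: PiE_def extensional_def)
      next
        case False
        then show ?thesis using fun_cong[OF that(3), of i] unfolding mk_def by simp
      qed
    qed
    then show ?thesis unfolding inj_on_def g_def by auto
  qed
  have finE: "finite (RDH_event n k c t)"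
  proof (rule finite_subset)
    show "RDH_event n k c t \<subseteq> vecs n k \<times> vecs n k \<times> unit_vecs n k"
      unfolding RDH_event_def by auto
    show "finite (vecs n k \<times> vecs n k \<times> unit_vecs n k)" using fin_vecs fin_unit by simp
  qed
  have "card (unit_vecs n k) * n ^ (k - 1) = card (Sigma (unit_vecs n k) (\<lambda>_. W))"
    using cardW by (simp add: card_cartesian_product)
  also have "\<dots> = card (g ` (Sigma (unit_vecs n k) (\<lambda>_. W)))" using card_image[OF inj] by simp
  also have "\<dots> \<le> card (RDH_event n k c t)" using gin finE card_mono by blast
  finally show ?thesis .
qed


theorem mainTheorem6:
  fixes n k p t :: nat and m c :: "nat \<Rightarrow> nat"
  assumes "odd n" and "n > 1" and "k \<ge> 1"
    and "prime p" and "p dvd n" and "\<forall>q. prime q \<and> q dvd n \<longrightarrow> p \<le> q"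
    and "m \<in> vecs n k" and "m \<noteq> (\<lambda>i\<in>{0..<k}. 0)"
    and "c \<in> vecs n k" and "t < n"
    and "RDH_event n k c t \<noteq> {}"
  shows "RDH_cond_prob n k m c t \<le> 1 / ((real p - 1) * real n ^ (k - 1))"
proof -
  have n0: "n > 0" using assms(2) by simp
  obtain j where jk: "j < k" and mj0: "m j \<noteq> 0"
  proof -
    have "\<exists>j<k. m j \<noteq> 0"
    proof (rule ccontr)
      assume "\<not> (\<exists>j<k. m j \<noteq> 0)"
      then have "m = (\<lambda>i\<in>{0..<k}. 0)"
        using assms(7) unfolding vecs_def by (auto simp: PiE_def extensional_def)
      then show False using assms(8) by simp
    qed
    then show ?thesis using that by blast
  qed
  have mjn: "m j < n" using assms(7) jk unfolding vecs_def by auto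
  have p2: "p \<ge> 2" using assms(4) prime_ge_2_nat by blast
  define Nu where "Nu = card {(m', x, y) \<in> RDH_event n k c t. m' = m}"
  define Nn where "Nn = card {y \<in> unit_vecs n k. Upsilon n k y m = t}"
  define U where "U = card (unit_vecs n k)"
  define D where "D = card (RDH_event n k c t)"
  have h1: "Nu \<le> Nn" unfolding Nu_def Nn_def by (rule num_le)
  have h2: "Nn * (p - 1) \<le> U" unfolding Nn_def U_def using key[of p n j k m t, OF assms(4,6) n0 jk mj0 mjn] .
  have h3: "U * n ^ (k - 1) \<le> D" unfolding U_def D_def using den_ge[OF n0 assms(3,9,10)] .
  have finE: "finite (RDH_event n k c t)"
  proof (rule finite_subset)
    show "RDH_event n k c t \<subseteq> vecs n k \<times> vecs n k \<times> unit_vecs n k"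
      unfolding RDH_event_def by auto
    show "finite (vecs n k \<times> vecs n k \<times> unit_vecs n k)" using fin_vecs fin_unit by simp
  qed
  have D0: "D > 0" unfolding D_def using finE assms(11) by (simp add: card_gt_0_iff)
  have "Nu * (p - 1) * n ^ (k - 1) \<le> D"
  proof -
    have "Nu * (p - 1) \<le> U" using h1 h2 by (meson dual_order.trans mult_le_mono1)
    then have "Nu * (p - 1) * n ^ (k - 1) \<le> U * n ^ (k - 1)" by (rule mult_le_mono1)
    then show ?thesis using h3 by linarith
  qed
  then have r0: "real (Nu * (p - 1) * n ^ (k - 1)) \<le> real D"
    by (simp only: of_nat_le_iff)
  have pp: "real (p - 1) = real p - 1" using p2 by (simp add: of_nat_diff)
  have r: "real Nu * (real p - 1) * real n ^ (k - 1) \<le> real D"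
    using r0 unfolding of_nat_mult of_nat_power pp .
  have pos: "(real p - 1) * real n ^ (k - 1) > 0" using p2 n0 by simp
  have "RDH_cond_prob n k m c t = real Nu / real D"
    unfolding RDH_cond_prob_def Nu_def D_def by simp
  also have "\<dots> \<le> 1 / ((real p - 1) * real n ^ (k - 1))"
    using r pos D0 by (simp add: divide_simps mult.assoc)
  finally show ?thesis .
qed

end
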